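(* Let $K=\{x\in[0,1]^n: g_\ell(x)\ge 0,\ \ell=1,\dots,m\}$ with affine $g_\ell$, $V=[n]$, $t>1$, $y\in\mathrm{La}^t(K)$, $k<t$ a positive integer and $S\subseteq V$ such that $y_I=0$ for every $I\in\mathcal P_{2t}(V)$ with $|I\cap S|\ge k$. Let $y'$ be the extension of $y$ (so $y'_I=y_I$ if $|I|\le 2t$ and $y'_I=0$ otherwise), and for $X\subseteq S$ let $z^X_I=\sum_{J:\,X\subseteq J\subseteq S}(-1)^{|J\setminus X|}y'_{I\cup J}$ for all $I\subseteq V$. Let $\mathcal T_1=\{A\subseteq V: |A\setminus S|\le t-k\}$ and $\mathcal T_2=\{B\subseteq V:|B\setminus S|<t-k\}$. Then for every $X\subseteq S$: $M_{\mathcal T_1}(z^X)\succeq0$, and $M_{\mathcal T_2}(g_\ell*z^X)\succeq 0$ for every $\ell$.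
   Context: Notation: $\mathcal P_t(U)$ is the set of subsets of $U$ of size at most $t$. For a collection $\mathcal T$ of subsets and a vector $y$ indexed by subsets, $M_{\mathcal T}(y)$ is the symmetric matrix indexed by $\mathcal T$ with $(I,J)$-entry $y_{I\cup J}$. For an affine $g(x)=b+\sum_{j}a_jx_j$, $(g*y)_I=b\,y_I+\sum_j a_j y_{I\cup\{j\}}$. The $t$-th Lasserre lifted polytope $\mathrm{La}^t(K)$ of $K=\{x\in[0,1]^n:g_\ell(x)\ge0,\ \ell=1,\dots,m\}$ is the set of $y\in[0,1]^{\mathcal P_{2t}(V)}$ with $y_\emptyset=1$, $M_{\mathcal P_t(V)}(y)\succeq0$, and $M_{\mathcal P_{t-1}(V)}(g_\ell*y)\succeq0$ for all $\ell$. *)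

theory Defs
  imports Complex_Main
begin

definition Psub :: "nat set \<Rightarrow> nat \<Rightarrow> nat set set" where
  "Psub U s = {I. I \<subseteq> U \<and> card I \<le> s}"

definition psd_on :: "'a set \<Rightarrow> ('a \<Rightarrow> 'a \<Rightarrow> real) \<Rightarrow> bool" where
  "psd_on T M \<longleftrightarrow> (\<forall>I\<in>T. \<forall>J\<in>T. M I J = M J I) \<and>
     (\<forall>v::'a \<Rightarrow> real. 0 \<le> (\<Sum>I\<in>T. \<Sum>J\<in>T. v I * M I J * v J))"

definition moment :: "(nat set \<Rightarrow> real) \<Rightarrow> nat set \<Rightarrow> nat set \<Rightarrow> real" where
  "moment y I J = y (I \<union> J)"

text \<open>(g * y)_I for affine g(x) = b + sum_{j in V} a_j x_j.\<close>
definition gstar :: "nat set \<Rightarrow> real \<Rightarrow> (nat \<Rightarrow> real) \<Rightarrow> (nat set \<Rightarrow> real) \<Rightarrow> nat set \<Rightarrow> real" where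
  "gstar V b a y I = b * y I + (\<Sum>j\<in>V. a j * y (I \<union> {j}))"

text \<open>y in La^t(K), K = {x in [0,1]^n : g_l(x) >= 0, l=1..m}, g_l(x) = b l + sum_j a l j * x_j, V = {1..n}.\<close>
definition lasserre :: "nat \<Rightarrow> nat \<Rightarrow> nat \<Rightarrow> (nat \<Rightarrow> real) \<Rightarrow> (nat \<Rightarrow> nat \<Rightarrow> real)
    \<Rightarrow> (nat set \<Rightarrow> real) \<Rightarrow> bool" where
  "lasserre n m t b a y \<longleftrightarrow>
     (\<forall>I\<in>Psub {1..n} (2*t). 0 \<le> y I \<and> y I \<le> 1) \<and> y {} = 1 \<and>
     psd_on (Psub {1..n} t) (moment y) \<and>
     (\<forall>l\<in>{1..m}. psd_on (Psub {1..n} (t - 1)) (moment (gstar {1..n} (b l) (a l) y)))"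

definition ext :: "nat \<Rightarrow> (nat set \<Rightarrow> real) \<Rightarrow> nat set \<Rightarrow> real" where
  "ext t y I = (if card I \<le> 2*t then y I else 0)"

definition zvec :: "nat set \<Rightarrow> nat \<Rightarrow> (nat set \<Rightarrow> real) \<Rightarrow> nat set \<Rightarrow> nat set \<Rightarrow> real" where
  "zvec S t y X I = (\<Sum>J\<in>{J. X \<subseteq> J \<and> J \<subseteq> S}. (-1) ^ card (J - X) * ext t y (I \<union> J))"

end

theory Submission imports Defs begin

lemma pow_insert_sum:
  fixes h :: "nat set \<Rightarrow> real"
  assumes "finite F" "x \<notin> F"
  shows "sum h (Pow (insert x F)) = sum h (Pow F) + (\<Sum>U\<in>Pow F. h (insert x U))"
proof -
  have d: "Pow F \<inter> insert x ` Pow F = {}" using assms by auto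
  have i: "inj_on (insert x) (Pow F)" using assms unfolding inj_on_def by (metis PowD insert_ident subsetD)
  have "sum h (Pow (insert x F)) = sum h (Pow F \<union> insert x ` Pow F)" by (simp add: Pow_insert)
  also have "\<dots> = sum h (Pow F) + sum h (insert x ` Pow F)"
    using d assms by (intro sum.union_disjoint) auto
  also have "sum h (insert x ` Pow F) = (\<Sum>U\<in>Pow F. h (insert x U))"
    using i by (simp add: sum.reindex)
  finally show ?thesis .
qed

lemma idem:
  fixes g :: "nat set \<Rightarrow> real"
  assumes "finite R"
  shows "(\<Sum>U1\<in>Pow R. \<Sum>U2\<in>Pow R. (-1)^(card U1 + card U2) * g (U1 \<union> U2))
         = (\<Sum>U\<in>Pow R. (-1)^card U * g U)"
  using assms
proof (induction R arbitrary: g rule: finite_induct)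
  case empty
  then show ?case by simp
next
  case (insert x F)
  have cU: "\<And>U. U \<in> Pow F \<Longrightarrow> card (insert x U) = Suc (card U)"
    using insert by (meson PowD finite_subset card_insert_disjoint subsetD)
  define A where "A = (\<Sum>U1\<in>Pow F. \<Sum>U2\<in>Pow F. (-1::real)^(card U1 + card U2) * g (U1 \<union> U2))"
  define B where "B = (\<Sum>U1\<in>Pow F. \<Sum>U2\<in>Pow F. (-1::real)^(card U1 + card U2) * g (insert x (U1 \<union> U2)))"
  have IA: "A = (\<Sum>U\<in>Pow F. (-1)^card U * g U)" unfolding A_def by (rule insert.IH)
  have IB: "B = (\<Sum>U\<in>Pow F. (-1)^card U * g (insert x U))" unfolding B_def
    using insert.IH[of "\<lambda>U. g (insert x U)"] by simp
  have "(\<Sum>U1\<in>Pow (insert x F). \<Sum>U2\<in>Pow (insert x F). (-1::real)^(card U1 + card U2) * g (U1 \<union> U2))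
     = (\<Sum>U1\<in>Pow F. (\<Sum>U2\<in>Pow F. (-1::real)^(card U1 + card U2) * g (U1 \<union> U2))
          - (\<Sum>U2\<in>Pow F. (-1::real)^(card U1 + card U2) * g (insert x (U1 \<union> U2))))
       + (\<Sum>U1\<in>Pow F. - (\<Sum>U2\<in>Pow F. (-1::real)^(card U1 + card U2) * g (insert x (U1 \<union> U2)))
          + (\<Sum>U2\<in>Pow F. (-1::real)^(card U1 + card U2) * g (insert x (U1 \<union> U2))))"
    using insert(1,2)
    by (simp add: pow_insert_sum cU sum_negf sum_subtractf sum.distrib)
  also have "\<dots> = A - B" by (simp add: A_def B_def sum_subtractf)
  also have "\<dots> = (\<Sum>U\<in>Pow (insert x F). (-1)^card U * g U)"
    using insert(1,2) IA IB by (simp add: pow_insert_sum cU sum_negf sum_subtractf)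
  finally show ?case .
qed

lemma group_sum:
  fixes c :: "'p \<Rightarrow> real" and \<kappa> :: "'p \<Rightarrow> 'k"
  assumes "finite P"
  shows "(\<Sum>p\<in>P. c p * \<phi> (\<kappa> p)) = (\<Sum>K\<in>\<kappa> ` P. (\<Sum>p\<in>{p\<in>P. \<kappa> p = K}. c p) * \<phi> K)"
proof -
  have "(\<Sum>p\<in>P. c p * \<phi> (\<kappa> p)) = (\<Sum>K\<in>\<kappa> ` P. \<Sum>p\<in>{p\<in>P. \<kappa> p = K}. c p * \<phi> (\<kappa> p))"
    using assms by (rule sum.image_gen)
  also have "\<dots> = (\<Sum>K\<in>\<kappa> ` P. (\<Sum>p\<in>{p\<in>P. \<kappa> p = K}. c p) * \<phi> K)"
    by (intro sum.cong refl) (simp add: sum_distrib_right)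
  finally show ?thesis .
qed

lemma double_extend:
  fixes u :: "'a \<Rightarrow> real"
  assumes "finite B" "A \<subseteq> B" "\<And>x. x \<in> B - A \<Longrightarrow> u x = 0"
  shows "(\<Sum>K\<in>A. \<Sum>L\<in>A. u K * M K L * u L) = (\<Sum>K\<in>B. \<Sum>L\<in>B. u K * M K L * u L)"
proof -
  have "(\<Sum>K\<in>A. \<Sum>L\<in>A. u K * M K L * u L) = (\<Sum>K\<in>A. \<Sum>L\<in>B. u K * M K L * u L)"
    using assms by (intro sum.cong refl sum.mono_neutral_left) auto
  also have "\<dots> = (\<Sum>K\<in>B. \<Sum>L\<in>B. u K * M K L * u L)"
    using assms by (intro sum.mono_neutral_left) auto
  finally show ?thesis .
qed

lemma cp: "(\<Sum>A\<in>T. \<Sum>U\<in>R'. f (A,U)) = (\<Sum>p\<in>T\<times>R'. f p)"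
  by (simp add: sum.cartesian_product)

lemma core:
  fixes H G z :: "nat set \<Rightarrow> real" and T :: "nat set set"
  assumes finV: "finite V" and SV: "S \<subseteq> V" and XS: "X \<subseteq> S"
    and H1: "\<And>K L. K \<subseteq> V \<Longrightarrow> L \<subseteq> V \<Longrightarrow> k \<le> card (K \<inter> S) \<Longrightarrow> H (K \<union> L) = 0"
    and H2: "\<And>K L. K \<in> Psub V r \<Longrightarrow> L \<in> Psub V r \<Longrightarrow> H (K \<union> L) = G (K \<union> L)"
    and psd: "psd_on (Psub V r) (moment G)"
    and T: "\<And>A. A \<in> T \<Longrightarrow> A \<subseteq> V \<and> card (A - S) + k \<le> r"
    and z: "\<And>I. z I = (\<Sum>U\<in>Pow (S - X). (-1)^card U * H (I \<union> X \<union> U))"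
  shows "psd_on T (moment z)"
  unfolding psd_on_def
proof (intro conjI ballI allI)
  fix I J show "moment z I J = moment z J I" by (simp add: moment_def Un_commute)
next
  fix v :: "nat set \<Rightarrow> real"
  define R where "R = S - X"
  define P where "P = T \<times> Pow R"
  define \<kappa> where "\<kappa> = (\<lambda>p::nat set \<times> nat set. fst p \<union> X \<union> snd p)"
  define c where "c = (\<lambda>p::nat set \<times> nat set. v (fst p) * (-1)^card (snd p))"
  define w where "w = (\<lambda>K. \<Sum>p\<in>{p\<in>P. \<kappa> p = K}. c p)"
  have finS: "finite S" using finV SV finite_subset by blast
  have finR: "finite R" using finS R_def by simp
  have finT: "finite T" using T finV by (meson Pow_iff finite_Pow_iff finite_subset subsetI)
  have finP: "finite P" using finR finT P_def by simp
  have kV: "\<kappa> p \<subseteq> V" if "p \<in> P" for p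
    using that T[of "fst p"] SV XS unfolding P_def \<kappa>_def R_def by auto
  have kS: "\<kappa> p - S = fst p - S" if "p \<in> P" for p
    using that XS unfolding P_def \<kappa>_def R_def by auto
  have step1: "z (A \<union> B) = (\<Sum>U1\<in>Pow R. \<Sum>U2\<in>Pow R. (-1)^card U1 * (-1)^card U2 *
        H ((A \<union> X \<union> U1) \<union> (B \<union> X \<union> U2)))" for A B
  proof -
    have "z (A \<union> B) = (\<Sum>U\<in>Pow R. (-1)^card U * H (A \<union> B \<union> X \<union> U))" using z R_def by simp
    also have "\<dots> = (\<Sum>U1\<in>Pow R. \<Sum>U2\<in>Pow R. (-1)^(card U1 + card U2) * H (A \<union> B \<union> X \<union> (U1 \<union> U2)))"
      using idem[OF finR, of "\<lambda>U. H (A \<union> B \<union> X \<union> U)"] by simp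
    also have "\<dots> = (\<Sum>U1\<in>Pow R. \<Sum>U2\<in>Pow R. (-1)^card U1 * (-1)^card U2 *
        H ((A \<union> X \<union> U1) \<union> (B \<union> X \<union> U2)))"
      by (intro sum.cong refl) (simp add: power_add Un_ac)
    finally show ?thesis .
  qed
  have "(\<Sum>A\<in>T. \<Sum>B\<in>T. v A * moment z A B * v B)
      = (\<Sum>A\<in>T. \<Sum>B\<in>T. \<Sum>U1\<in>Pow R. \<Sum>U2\<in>Pow R. c (A,U1) * H (\<kappa> (A,U1) \<union> \<kappa> (B,U2)) * c (B,U2))"
    unfolding moment_def step1 c_def \<kappa>_def
    by (simp add: sum_distrib_left sum_distrib_right mult_ac)
  also have "\<dots> = (\<Sum>A\<in>T. \<Sum>U1\<in>Pow R. \<Sum>B\<in>T. \<Sum>U2\<in>Pow R. c (A,U1) * H (\<kappa> (A,U1) \<union> \<kappa> (B,U2)) * c (B,U2))"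
    by (intro sum.cong refl sum.swap)
  also have "\<dots> = (\<Sum>p\<in>P. \<Sum>q\<in>P. c p * H (\<kappa> p \<union> \<kappa> q) * c q)"
  proof -
    have inner: "(\<Sum>B\<in>T. \<Sum>U2\<in>Pow R. c (A,U1) * H (\<kappa> (A,U1) \<union> \<kappa> (B,U2)) * c (B,U2))
       = (\<Sum>q\<in>P. c (A,U1) * H (\<kappa> (A,U1) \<union> \<kappa> q) * c q)" for A U1
      unfolding P_def using cp[where f="\<lambda>q. c (A,U1) * H (\<kappa> (A,U1) \<union> \<kappa> q) * c q" and T=T and R'="Pow R"] by simp
    show ?thesis unfolding inner unfolding P_def
      using cp[where f="\<lambda>p. \<Sum>q\<in>T \<times> Pow R. c p * H (\<kappa> p \<union> \<kappa> q) * c q" and T=T and R'="Pow R"] by simp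
  qed
  also have "\<dots> = (\<Sum>p\<in>P. c p * (\<Sum>q\<in>P. c q * H (\<kappa> p \<union> \<kappa> q)))"
    by (simp add: sum_distrib_left mult_ac)
  also have "\<dots> = (\<Sum>p\<in>P. c p * (\<Sum>L\<in>\<kappa> ` P. w L * H (\<kappa> p \<union> L)))"
    unfolding w_def using group_sum[OF finP, of c "\<lambda>L. H (_ \<union> L)" \<kappa>] by simp
  also have "\<dots> = (\<Sum>K\<in>\<kappa> ` P. w K * (\<Sum>L\<in>\<kappa> ` P. w L * H (K \<union> L)))"
    using group_sum[OF finP, of c "\<lambda>K. (\<Sum>L\<in>\<kappa> ` P. w L * H (K \<union> L))" \<kappa>] by (simp add: w_def)
  also have "\<dots> = (\<Sum>K\<in>\<kappa> ` P. \<Sum>L\<in>\<kappa> ` P. w K * H (K \<union> L) * w L)"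
    by (simp add: sum_distrib_left mult_ac)
  finally have Q: "(\<Sum>A\<in>T. \<Sum>B\<in>T. v A * moment z A B * v B) =
       (\<Sum>K\<in>\<kappa> ` P. \<Sum>L\<in>\<kappa> ` P. w K * H (K \<union> L) * w L)" .
  define w' where "w' = (\<lambda>K. if K \<in> \<kappa> ` P \<and> card (K \<inter> S) < k then w K else 0)"
  have inPsub: "K \<in> Psub V r" if h: "K \<in> \<kappa> ` P" "card (K \<inter> S) < k" for K
  proof -
    obtain p where p: "p \<in> P" "K = \<kappa> p" using h(1) by blast
    have "fst p \<in> T" using p P_def by auto
    hence "card (fst p - S) + k \<le> r" using T by blast
    moreover have "card K = card (K \<inter> S) + card (K - S)"
      using kV[OF p(1)] p finV finite_subset card_Int_Diff by blast
    ultimately show ?thesis using kS[OF p(1)] p kV[OF p(1)] h(2) unfolding Psub_def by auto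
  qed
  have eq: "w K * H (K \<union> L) * w L = w' K * G (K \<union> L) * w' L" if "K \<in> \<kappa> ` P" "L \<in> \<kappa> ` P" for K L
  proof (cases "k \<le> card (K \<inter> S) \<or> k \<le> card (L \<inter> S)")
    case True
    have KV: "K \<subseteq> V" "L \<subseteq> V" using that kV by auto
    have "H (K \<union> L) = 0" using True H1[OF KV] H1[OF KV(2,1)] by (auto simp: Un_commute)
    then show ?thesis using True w'_def by auto
  next
    case False
    then show ?thesis using that inPsub H2 w'_def by auto
  qed
  have "(\<Sum>K\<in>\<kappa> ` P. \<Sum>L\<in>\<kappa> ` P. w K * H (K \<union> L) * w L)
     = (\<Sum>K\<in>\<kappa> ` P. \<Sum>L\<in>\<kappa> ` P. w' K * moment G K L * w' L)"
    using eq by (simp add: moment_def)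
  also have "\<dots> = (\<Sum>K\<in>\<kappa> ` P \<union> Psub V r. \<Sum>L\<in>\<kappa> ` P \<union> Psub V r. w' K * moment G K L * w' L)"
    using finP finV by (intro double_extend) (auto simp: w'_def Psub_def)
  also have "\<dots> = (\<Sum>K\<in>Psub V r. \<Sum>L\<in>Psub V r. w' K * moment G K L * w' L)"
    using finP finV inPsub by (intro double_extend[symmetric]) (auto simp: w'_def Psub_def)
  also have "\<dots> \<ge> 0" using psd unfolding psd_on_def by blast
  finally show "0 \<le> (\<Sum>A\<in>T. \<Sum>B\<in>T. v A * moment z A B * v B)" using Q by simp
qed

lemma sum_shift:
  fixes f :: "nat set \<Rightarrow> real"
  assumes "finite S" "X \<subseteq> S"
  shows "(\<Sum>J\<in>{J. X \<subseteq> J \<and> J \<subseteq> S}. (-1)^card (J - X) * f J)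
       = (\<Sum>U\<in>Pow (S - X). (-1)^card U * f (X \<union> U))"
proof -
  have e: "{J. X \<subseteq> J \<and> J \<subseteq> S} = (\<lambda>U. X \<union> U) ` Pow (S - X)"
  proof (intro set_eqI iffI)
    fix J assume "J \<in> {J. X \<subseteq> J \<and> J \<subseteq> S}"
    hence "J = X \<union> (J - X)" "J - X \<in> Pow (S - X)" by auto
    thus "J \<in> (\<lambda>U. X \<union> U) ` Pow (S - X)" by blast
  next
    fix J assume "J \<in> (\<lambda>U. X \<union> U) ` Pow (S - X)"
    thus "J \<in> {J. X \<subseteq> J \<and> J \<subseteq> S}" using assms by auto
  qed
  have i: "inj_on (\<lambda>U. X \<union> U) (Pow (S - X))" unfolding inj_on_def by auto
  have d: "\<And>U. U \<in> Pow (S - X) \<Longrightarrow> X \<union> U - X = U" by auto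
  show ?thesis unfolding e using i d by (simp add: sum.reindex)
qed

lemma zvec_alt:
  assumes "finite S" "X \<subseteq> S"
  shows "zvec S t y X I = (\<Sum>U\<in>Pow (S - X). (-1)^card U * ext t y (I \<union> X \<union> U))"
  unfolding zvec_def using sum_shift[OF assms, of "\<lambda>J. ext t y (I \<union> J)"] by (simp add: Un_assoc)

lemma gz:
  assumes "finite S" "X \<subseteq> S"
  shows "gstar V b a (zvec S t y X) I
     = (\<Sum>U\<in>Pow (S - X). (-1)^card U * gstar V b a (ext t y) (I \<union> X \<union> U))"
proof -
  have "gstar V b a (zvec S t y X) I = b * (\<Sum>U\<in>Pow (S - X). (-1)^card U * ext t y (I \<union> X \<union> U))
      + (\<Sum>j\<in>V. a j * (\<Sum>U\<in>Pow (S - X). (-1)^card U * ext t y (I \<union> {j} \<union> X \<union> U)))"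
    unfolding gstar_def zvec_alt[OF assms] ..
  also have "\<dots> = (\<Sum>U\<in>Pow (S - X). (-1)^card U * (b * ext t y (I \<union> X \<union> U)))
      + (\<Sum>U\<in>Pow (S - X). \<Sum>j\<in>V. (-1)^card U * (a j * ext t y (I \<union> X \<union> U \<union> {j})))"
    by (subst sum.swap) (simp add: sum_distrib_left Un_ac mult_ac)
  also have "\<dots> = (\<Sum>U\<in>Pow (S - X). (-1)^card U * gstar V b a (ext t y) (I \<union> X \<union> U))"
    by (simp add: gstar_def sum.distrib distrib_left sum_distrib_left)
  finally show ?thesis .
qed

theorem mainTheorem7:
  fixes n m t k :: nat and b :: "nat \<Rightarrow> real" and a :: "nat \<Rightarrow> nat \<Rightarrow> real"
    and y :: "nat set \<Rightarrow> real" and S X :: "nat set"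
  assumes "1 < t"
    and "lasserre n m t b a y"
    and "0 < k" and "k < t"
    and "S \<subseteq> {1..n}"
    and "\<forall>I\<in>Psub {1..n} (2*t). k \<le> card (I \<inter> S) \<longrightarrow> y I = 0"
    and "X \<subseteq> S"
  shows "psd_on {A. A \<subseteq> {1..n} \<and> card (A - S) \<le> t - k} (moment (zvec S t y X)) \<and>
    (\<forall>l\<in>{1..m}. psd_on {B. B \<subseteq> {1..n} \<and> card (B - S) < t - k}
                 (moment (gstar {1..n} (b l) (a l) (zvec S t y X))))"
proof -
  define V where "V = {1..n::nat}"
  have finV: "finite V" using V_def by simp
  have SV: "S \<subseteq> V" using assms(5) V_def by simp
  have finS: "finite S" using finV SV finite_subset by blast
  have L: "psd_on (Psub V t) (moment y)"
     "\<And>l. l \<in> {1..m} \<Longrightarrow> psd_on (Psub V (t - 1)) (moment (gstar V (b l) (a l) y))"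
    using assms(2) unfolding lasserre_def V_def by auto
  have ez: "ext t y I = 0" if "I \<subseteq> V" "k \<le> card (I \<inter> S)" for I
    using that assms(6) unfolding ext_def Psub_def V_def by auto
  have mono: "card (K \<inter> S) \<le> card ((K \<union> L) \<inter> S)" for K L
    using finS by (intro card_mono) auto
  have ez2: "ext t y (K \<union> L) = 0" if "K \<subseteq> V" "L \<subseteq> V" "k \<le> card (K \<inter> S)" for K L
    using ez[of "K \<union> L"] mono[of K L] that by auto
  have cu: "card (K \<union> L) \<le> card K + card L" for K L :: "nat set" by (rule card_Un_le)
  have P1: "psd_on {A. A \<subseteq> V \<and> card (A - S) \<le> t - k} (moment (zvec S t y X))"
  proof (rule core[OF finV SV assms(7), where H="ext t y" and G=y and r=t and k=k])
    show "ext t y (K \<union> L) = 0" if "K \<subseteq> V" "L \<subseteq> V" "k \<le> card (K \<inter> S)" for K L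
      using ez2 that by blast
    show "ext t y (K \<union> L) = y (K \<union> L)" if "K \<in> Psub V t" "L \<in> Psub V t" for K L
      using that cu[of K L] unfolding Psub_def ext_def by auto
    show "psd_on (Psub V t) (moment y)" by (rule L(1))
    show "A \<subseteq> V \<and> card (A - S) + k \<le> t" if "A \<in> {A. A \<subseteq> V \<and> card (A - S) \<le> t - k}" for A
      using that assms(4) by auto
    show "zvec S t y X I = (\<Sum>U\<in>Pow (S - X). (-1)^card U * ext t y (I \<union> X \<union> U))" for I
      by (rule zvec_alt[OF finS assms(7)])
  qed
  have P2: "psd_on {B. B \<subseteq> V \<and> card (B - S) < t - k} (moment (gstar V (b l) (a l) (zvec S t y X)))"
    if l: "l \<in> {1..m}" for l
  proof (rule core[OF finV SV assms(7), where H="gstar V (b l) (a l) (ext t y)"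
        and G="gstar V (b l) (a l) y" and r="t - 1" and k=k])
    show "gstar V (b l) (a l) (ext t y) (K \<union> L) = 0"
      if "K \<subseteq> V" "L \<subseteq> V" "k \<le> card (K \<inter> S)" for K L
    proof -
      have "ext t y (K \<union> L \<union> {j}) = 0" if "j \<in> V" for j
        using ez2[of K "L \<union> {j}"] \<open>K \<subseteq> V\<close> \<open>L \<subseteq> V\<close> \<open>k \<le> card (K \<inter> S)\<close> that
        by (simp add: Un_assoc)
      thus ?thesis using ez2[OF that] unfolding gstar_def by simp
    qed
    show "gstar V (b l) (a l) (ext t y) (K \<union> L) = gstar V (b l) (a l) y (K \<union> L)"
      if "K \<in> Psub V (t - 1)" "L \<in> Psub V (t - 1)" for K L
    proof -
      have cK: "card K \<le> t - 1" "card L \<le> t - 1" using that unfolding Psub_def by auto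
      have c1: "card (K \<union> L) \<le> 2 * t" using cu[of K L] cK by linarith
      have c2: "card (K \<union> L \<union> {j}) \<le> 2 * t" for j
        using cu[of "K \<union> L" "{j}"] cu[of K L] cK assms(1) by simp
      show ?thesis unfolding gstar_def ext_def using c1 c2 by simp
    qed
    show "psd_on (Psub V (t - 1)) (moment (gstar V (b l) (a l) y))" by (rule L(2)[OF l])
    show "B \<subseteq> V \<and> card (B - S) + k \<le> t - 1" if "B \<in> {B. B \<subseteq> V \<and> card (B - S) < t - k}" for B
      using that assms(4) by auto
    show "gstar V (b l) (a l) (zvec S t y X) I = (\<Sum>U\<in>Pow (S - X). (-1)^card U * gstar V (b l) (a l) (ext t y) (I \<union> X \<union> U))" for I
      by (rule gz[OF finS assms(7)])
  qed
  show ?thesis using P1 P2 unfolding V_def by blast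
qed
end
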